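(* Let $U,V\in\mathbb{R}^{3\times3}$ be symmetric positive definite with $U\neq V$, $UV=VU$, and $V=RUR^T$ for some $R\in SO(3)$. Suppose the eigenvalues of $U$ satisfy $0<\lambda_1<\lambda_2=1<\lambda_3$, that $U$ and $V$ have a common eigenvector for the eigenvalue $1$, and that $$\lambda_3=\sqrt{2-\lambda_1^2}.$$ Then there exist rotations $R_u^{+},R_v^{+},R_u^{-},R_v^{-}\in SO(3)$, vectors $b_u^{\pm},b_v^{\pm}\in\mathbb{R}^3$ and unit vectors $\hat m^{+},\hat m^{-}$ with $\hat m^{+}\nparallel\hat m^{-}$ such that, for each sign, $$R_u^{\pm}U-I=b_u^{\pm}\otimes\hat m^{\pm},\qquad R_v^{\pm}V-I=b_v^{\pm}\otimes\hat m^{\pm},$$ and hence $R_u^{\pm}U-R_v^{\pm}V=(b_u^{\pm}-b_v^{\pm})\otimes\hat m^{\pm}$. That is, $U$, $V$ and the identity form two distinct planar triple clusters in which the three pairwise differences are rank-one with a common normal.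
   Context: Here $I$ is the identity matrix (representing austenite) and $SO(3)$ the rotation group. *)

theory Defs
  imports "HOL-Analysis.Analysis"
begin

definition rotation3 :: "real^3^3 \<Rightarrow> bool" where
  "rotation3 R \<longleftrightarrow> orthogonal_matrix R \<and> det R = 1"

definition spd :: "real^3^3 \<Rightarrow> bool" where
  "spd A \<longleftrightarrow> transpose A = A \<and> (\<forall>x. x \<noteq> 0 \<longrightarrow> x \<bullet> (A *v x) > 0)"

definition eigenvalues3 :: "real^3^3 \<Rightarrow> real set" where
  "eigenvalues3 A = {l. \<exists>v. v \<noteq> 0 \<and> A *v v = l *\<^sub>R v}"

definition outer :: "real^3 \<Rightarrow> real^3 \<Rightarrow> real^3^3" where
  "outer a b = (\<chi> i j. a $ i * b $ j)"

end

theory Submission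
  imports Defs
begin


lemma adj3: "(A *v x) \<bullet> y = x \<bullet> (transpose A *v (y::real^'n))"
  by (metis dot_lmul_matrix inner_commute transpose_matrix_vector)

lemma orth_norm: assumes "transpose Q ** Q = mat 1" shows "norm (Q *v (x::real^'n)) = norm x"
proof -
  have "(Q *v x) \<bullet> (Q *v x) = x \<bullet> x"
    by (simp add: adj3 matrix_vector_mul_assoc assms del: transpose_matrix_vector)
  then show ?thesis by (simp add: norm_eq_sqrt_inner)
qed

lemma mat_sub_ldistrib: "(A::real^'n^'n) ** (B - C) = A ** B - A ** C"
  by (simp add: vec_eq_iff matrix_matrix_mult_def sum_subtractf algebra_simps)
lemma mat_sub_rdistrib: "((B::real^'n^'n) - C) ** A = B ** A - C ** A"
  by (simp add: vec_eq_iff matrix_matrix_mult_def sum_subtractf algebra_simps)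

lemma mat_add_rdistrib: "((B::real^'n^'n) + C) ** A = B ** A + C ** A"
  by (simp add: vec_eq_iff matrix_matrix_mult_def sum.distrib algebra_simps)

lemma outer_diff: "outer a m - outer b m = outer (a - b) m"
  by (simp add: outer_def vec_eq_iff algebra_simps)

lemma outer_conj: "transpose P ** outer a b ** P = outer (transpose P *v a) (transpose P *v b)"
  by (simp add: outer_def vec_eq_iff matrix_matrix_mult_def matrix_vector_mult_def transpose_def
      sum_distrib_left sum_distrib_right mult.commute mult.left_commute del: transpose_matrix_vector)

lemma mult_transpose_nth: "((A::real^'n^'m) ** transpose B)$i$j = A$i \<bullet> B$j"
  by (simp add: matrix_matrix_mult_def transpose_def inner_vec_def mult.commute)

lemma mult3_transpose_nth: "((A::real^'n^'m) ** M ** transpose B)$i$j = A$i \<bullet> (M *v B$j)"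
proof -
  have "(A ** M ** transpose B)$i$j = (A ** transpose (B ** transpose M))$i$j"
    by (simp add: matrix_transpose_mul matrix_mul_assoc)
  also have "\<dots> = A$i \<bullet> (B ** transpose M)$j" by (rule mult_transpose_nth)
  also have "(B ** transpose M)$j = M *v B$j"
    by (simp add: vec_eq_iff matrix_matrix_mult_def matrix_vector_mult_def transpose_def mult.commute)
  finally show ?thesis .
qed

lemma key:
  fixes P Q0 D0 A :: "real^3^3"
  assumes P: "orthogonal_matrix P" and Q0: "rotation3 Q0" and A: "A = transpose P ** D0 ** P"
    and E: "Q0 ** D0 - mat 1 = outer b m"
  shows "rotation3 (transpose P ** Q0 ** P) \<and>
    (transpose P ** Q0 ** P) ** A - mat 1 = outer (transpose P *v b) (transpose P *v m)"
proof
  have PP: "P ** transpose P = mat 1" "transpose P ** P = mat 1" using P by (auto simp: orthogonal_matrix_def)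
  have dP: "det P * det P = 1" using det_orthogonal_matrix[OF P] by auto
  show "rotation3 (transpose P ** Q0 ** P)"
    using Q0 P dP unfolding rotation3_def
    by (simp add: orthogonal_matrix_mul det_mul)
  have "(transpose P ** Q0 ** P) ** A = transpose P ** (Q0 ** D0) ** P"
    by (simp add: A matrix_mul_assoc PP(1))
      (metis PP(1) matrix_mul_assoc matrix_mul_rid)
  also have "Q0 ** D0 = outer b m + mat 1" using E by (simp add: algebra_simps)
  finally have "(transpose P ** Q0 ** P) ** A = transpose P ** (outer b m + mat 1) ** P" .
  then have "(transpose P ** Q0 ** P) ** A = transpose P ** outer b m ** P + mat 1"
    by (simp add: matrix_add_ldistrib mat_add_rdistrib PP)
  then show "(transpose P ** Q0 ** P) ** A - mat 1 = outer (transpose P *v b) (transpose P *v m)"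
    by (simp add: outer_conj del: transpose_matrix_vector)
qed



definition diag3 :: "real \<Rightarrow> real \<Rightarrow> real \<Rightarrow> real^3^3" where
  "diag3 a b c = vector [vector [a,0,0]::real^3, vector [0,b,0], vector [0,0,c]]"
definition rot3 :: "real \<Rightarrow> real \<Rightarrow> real^3^3" where
  "rot3 c d = vector [vector [c,0,-d]::real^3, vector [0,1,0], vector [d,0,c]]"

lemma rot3_rot: assumes "c^2 + d^2 = 1" shows "rotation3 (rot3 c d)"
proof -
  have "transpose (rot3 c d) ** rot3 c d = mat 1"
    using assms
    by (simp add: vec_eq_iff forall_3 matrix_matrix_mult_def sum_3 transpose_def mat_def rot3_def
        power2_eq_square)
  moreover have "det (rot3 c d) = 1" using assms
    by (simp add: det_3 rot3_def power2_eq_square)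
  ultimately show ?thesis by (simp add: rotation3_def orthogonal_matrix)
qed

lemma rank1:
  fixes l1 l3 c d k :: real
  assumes h: "l1^2 + l3^2 = 2" and c: "c = (l1+l3)/2" and d: "d = (l3-l1)/2" and k: "k \<noteq> 0"
  shows "rot3 c d ** diag3 l1 1 l3 - mat 1 = outer (vector[k*(c*l1-1),0,k*d*l1]) (vector[1/k,0,1/k])"
    and "rot3 c (-d) ** diag3 l3 1 l1 - mat 1 = outer (vector[k*(c*l3-1),0,-k*d*l3]) (vector[1/k,0,1/k])"
    and "rot3 c (-d) ** diag3 l1 1 l3 - mat 1 = outer (vector[k*(c*l1-1),0,-k*d*l1]) (vector[1/k,0,-1/k])"
    and "rot3 c d ** diag3 l3 1 l1 - mat 1 = outer (vector[k*(c*l3-1),0,k*d*l3]) (vector[1/k,0,-1/k])"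
proof -
  have e1: "-d*l3 = c*l1 - 1" "c*l3 - 1 = d*l1"
    using h unfolding c d by (simp_all add: field_simps power2_eq_square; linarith)+
  show "rot3 c d ** diag3 l1 1 l3 - mat 1 = outer (vector[k*(c*l1-1),0,k*d*l1]) (vector[1/k,0,1/k])"
    "rot3 c (-d) ** diag3 l3 1 l1 - mat 1 = outer (vector[k*(c*l3-1),0,-k*d*l3]) (vector[1/k,0,1/k])"
    "rot3 c (-d) ** diag3 l1 1 l3 - mat 1 = outer (vector[k*(c*l1-1),0,-k*d*l1]) (vector[1/k,0,-1/k])"
    "rot3 c d ** diag3 l3 1 l1 - mat 1 = outer (vector[k*(c*l3-1),0,k*d*l3]) (vector[1/k,0,-1/k])"
    using k e1
    by (simp_all add: vec_eq_iff forall_3 matrix_matrix_mult_def sum_3 mat_def rot3_def diag3_def outer_def;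
        simp add: field_simps; linarith)+
qed



lemma conj_back: "transpose P ** P = mat 1 \<Longrightarrow> transpose P ** ((P::real^'n^'n) ** X ** transpose P) ** P = X"
proof -
  assume a: "transpose P ** P = mat 1"
  have "transpose P ** (P ** X ** transpose P) ** P = (transpose P ** P) ** X ** (transpose P ** P)"
    by (simp add: matrix_mul_assoc)
  then show ?thesis using a by simp
qed

lemma conj_mult: "transpose P ** P = mat 1 \<Longrightarrow>
  ((P::real^'n^'n) ** X ** transpose P) ** (P ** Y ** transpose P) = P ** (X ** Y) ** transpose P"
proof -
  assume a: "transpose P ** P = mat 1"
  have "(P ** X ** transpose P) ** (P ** Y ** transpose P) = P ** X ** (transpose P ** P) ** Y ** transpose P"
    by (simp add: matrix_mul_assoc)
  then show ?thesis using a by (simp add: matrix_mul_assoc)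
qed

lemma mv_nth: "((A::real^'n^'m) *v x)$i = A$i \<bullet> x"
  by (simp add: matrix_vector_mult_def inner_vec_def mult.commute)

theorem mainTheorem4:
  fixes U V R :: "real^3^3" and l1 l3 :: real
  assumes "spd U" and "spd V" and "U \<noteq> V" and "U ** V = V ** U"
    and "rotation3 R" and "V = R ** U ** transpose R"
    and "0 < l1" and "l1 < 1" and "1 < l3"
    and "eigenvalues3 U = {l1, 1, l3}"
    and "\<exists>e. e \<noteq> 0 \<and> U *v e = e \<and> V *v e = e"
    and "l3 = sqrt (2 - l1^2)"
  shows "\<exists>Rup Rvp Rum Rvm bup bvp bum bvm mp mm.
     rotation3 Rup \<and> rotation3 Rvp \<and> rotation3 Rum \<and> rotation3 Rvm \<and>
     norm (mp :: real^3) = 1 \<and> norm (mm :: real^3) = 1 \<and>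
     \<not> (\<exists>c. mp = c *\<^sub>R mm) \<and>
     Rup ** U - mat 1 = outer bup mp \<and> Rvp ** V - mat 1 = outer bvp mp \<and>
     Rup ** U - Rvp ** V = outer (bup - bvp) mp \<and>
     Rum ** U - mat 1 = outer bum mm \<and> Rvm ** V - mat 1 = outer bvm mm \<and>
     Rum ** U - Rvm ** V = outer (bum - bvm) mm"
proof -
  note tm = transpose_matrix_vector
  have h: "l1^2 + l3^2 = 2"
  proof -
    have "l1^2 < 1" using assms(7,8) by (simp add: power_less_one_iff)
    then show ?thesis using assms(12) by simp
  qed
  have symU: "transpose U = U" using assms(1) by (simp add: spd_def)
  obtain u1 where u1: "u1 \<noteq> 0" "U *v u1 = l1 *\<^sub>R u1"
    using assms(10) unfolding eigenvalues3_def by blast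
  obtain u3 where u3: "u3 \<noteq> 0" "U *v u3 = l3 *\<^sub>R u3"
    using assms(10) unfolding eigenvalues3_def by blast
  obtain u2 where u2: "u2 \<noteq> 0" "U *v u2 = u2" "V *v u2 = u2" using assms(11) by blast
  have sym: "(U *v x) \<bullet> y = x \<bullet> (U *v y)" for x y
    using adj3[of U x y] symU by (simp del: tm)
  have o12: "u1 \<bullet> u2 = 0"
  proof -
    have "l1 * (u1 \<bullet> u2) = u1 \<bullet> u2" using sym[of u1 u2] u1 u2 by simp
    then show ?thesis using assms(8) by (metis mult_cancel_right1 mult.commute less_irrefl)
  qed
  have o13: "u1 \<bullet> u3 = 0"
  proof -
    have "l1 * (u1 \<bullet> u3) = l3 * (u1 \<bullet> u3)" using sym[of u1 u3] u1 u3 by simp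
    then show ?thesis using assms(8,9) by auto
  qed
  have o23: "u2 \<bullet> u3 = 0"
  proof -
    have "(u2 \<bullet> u3) = l3 * (u2 \<bullet> u3)" using sym[of u2 u3] u2 u3 by simp
    then show ?thesis using assms(9) by (metis mult_cancel_right1 mult.commute less_irrefl)
  qed
  define p1 where "p1 = (1/norm u1) *\<^sub>R u1"
  define p2 where "p2 = (1/norm u2) *\<^sub>R u2"
  define p3 where "p3 = (1/norm u3) *\<^sub>R u3"
  have n: "p1 \<bullet> p1 = 1" "p2 \<bullet> p2 = 1" "p3 \<bullet> p3 = 1"
    using u1 u2 u3 by (auto simp: p1_def p2_def p3_def power2_norm_eq_inner[symmetric] power2_eq_square)
  have o: "p1 \<bullet> p2 = 0" "p1 \<bullet> p3 = 0" "p2 \<bullet> p3 = 0" "p2 \<bullet> p1 = 0" "p3 \<bullet> p1 = 0" "p3 \<bullet> p2 = 0"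
    using o12 o13 o23 by (auto simp: p1_def p2_def p3_def inner_commute)
  have Up: "U *v p1 = l1 *\<^sub>R p1" "U *v p2 = p2" "U *v p3 = l3 *\<^sub>R p3" "V *v p2 = p2"
    using u1 u2 u3 by (simp_all add: p1_def p2_def p3_def matrix_vector_mult_scaleR)
  define P :: "real^3^3" where "P = vector [p1, p2, p3]"
  have Pn: "P$1 = p1" "P$2 = p2" "P$3 = p3" by (simp_all add: P_def)
  have PP1: "P ** transpose P = mat 1"
    by (simp add: vec_eq_iff forall_3 mult_transpose_nth Pn n o mat_def)
  then have PP2: "transpose P ** P = mat 1" by (simp add: matrix_left_right_inverse)
  have oP: "orthogonal_matrix P" using PP1 PP2 by (simp add: orthogonal_matrix_def)
  define D0 where "D0 = diag3 l1 1 l3"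
  have "P ** U ** transpose P = D0"
    by (simp add: vec_eq_iff forall_3 mult3_transpose_nth Pn Up n o D0_def diag3_def)
  then have UD: "U = transpose P ** D0 ** P"
    using conj_back[OF PP2, of U] by simp
  define W where "W = P ** V ** transpose P"
  have VW: "V = transpose P ** W ** P"
    unfolding W_def using conj_back[OF PP2, of V] by simp
  have comm: "D0 ** W = W ** D0"
    unfolding W_def \<open>P ** U ** transpose P = D0\<close>[symmetric] conj_mult[OF PP2]
    using assms(4) by simp
  have W22: "W$2$2 = 1" unfolding W_def by (simp add: mult3_transpose_nth Pn Up n)
  have E: "(D0 ** W)$i$j = (W ** D0)$i$j" for i j using comm by simp
  have z: "x * w = w * y \<Longrightarrow> x \<noteq> y \<Longrightarrow> w = 0" for x y w :: real
    by (metis mult.commute mult_cancel_left)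
  have Woff: "W$1$2 = 0" "W$1$3 = 0" "W$2$1 = 0" "W$2$3 = 0" "W$3$1 = 0" "W$3$2 = 0"
    using E[of 1 2] E[of 1 3] E[of 2 1] E[of 2 3] E[of 3 1] E[of 3 2] assms(8,9)
    by (simp_all add: matrix_matrix_mult_def sum_3 D0_def diag3_def; rule z; simp)+
  define a where "a = W$1$1"
  define b where "b = W$3$3"
  have Wd: "W = diag3 a 1 b"
    using Woff W22 by (simp add: vec_eq_iff forall_3 diag3_def a_def b_def)
  have ROT: "transpose R ** R = mat 1" "R ** transpose R = mat 1"
    using assms(5) by (auto simp: rotation3_def orthogonal_matrix_def)
  have RV: "transpose R ** V = U ** transpose R"
  proof -
    have "transpose R ** (R ** U ** transpose R) = (transpose R ** R) ** U ** transpose R"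
      by (simp add: matrix_mul_assoc)
    then show ?thesis using assms(6) ROT by simp
  qed
  have eig: "\<mu> \<in> {l1, 1, l3}" if "V *v p = \<mu> *\<^sub>R p" "p \<bullet> p = 1" for \<mu> p
  proof -
    define x where "x = transpose R *v p"
    have "norm x = norm p" unfolding x_def by (rule orth_norm) (simp add: ROT)
    then have "x \<noteq> 0" using that(2) by auto
    moreover have "U *v x = \<mu> *\<^sub>R x"
    proof -
      have "U *v x = (U ** transpose R) *v p" by (simp add: x_def matrix_vector_mul_assoc del: tm)
      also have "\<dots> = transpose R *v (V *v p)" by (simp add: RV[symmetric] matrix_vector_mul_assoc del: tm)
      also have "\<dots> = \<mu> *\<^sub>R x" using that(1) by (simp add: x_def matrix_vector_mult_scaleR del: tm)
      finally show ?thesis .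
    qed
    ultimately show ?thesis using assms(10) unfolding eigenvalues3_def by blast
  qed
  have Pp: "P *v p1 = vector [1,0,0]" "P *v p3 = vector [0,0,1]"
    by (simp_all add: vec_eq_iff forall_3 mv_nth Pn n o)
  have tP: "transpose P *v vector [1,0,0] = p1" "transpose P *v vector [0,0,1] = p3"
    by (simp_all add: vec_eq_iff matrix_vector_mult_def transpose_def sum_3 Pn del: tm)
  have Vp: "V *v p1 = a *\<^sub>R p1" "V *v p3 = b *\<^sub>R p3"
  proof -
    have "W *v vector [1,0,0] = a *\<^sub>R vector [1,0,0]" "W *v vector [0,0,1] = b *\<^sub>R vector [0,0,1]"
      by (simp_all add: Wd vec_eq_iff forall_3 matrix_vector_mult_def sum_3 diag3_def)
    then show "V *v p1 = a *\<^sub>R p1" "V *v p3 = b *\<^sub>R p3"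
      by (simp_all add: VW matrix_vector_mul_assoc[symmetric] Pp tP matrix_vector_mult_scaleR del: tm)
  qed
  have aS: "a \<in> {l1, 1, l3}" using eig[OF Vp(1) n(1)] .
  have bS: "b \<in> {l1, 1, l3}" using eig[OF Vp(2) n(3)] .
  have dP: "det P * det P = 1" using det_orthogonal_matrix[OF oP] by auto
  have dR: "det R = 1" using assms(5) by (simp add: rotation3_def)
  have "det V = det U" using assms(6) dR by (simp add: det_mul)
  moreover have "det V = det W" using VW dP by (simp add: det_mul)
  moreover have "det U = det D0" using UD dP by (simp add: det_mul)
  ultimately have ab: "a * b = l1 * l3"
    by (simp add: Wd D0_def det_3 diag3_def)
  have ne: "l1 * l3 \<noteq> 1"
  proof
    assume "l1 * l3 = 1"
    then have "(l1*l3)^2 = 1" by simp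
    moreover have "l3^2 = 2 - l1^2" using h by simp
    ultimately have "l1^2 * (2 - l1^2) = 1" by (simp add: power_mult_distrib)
    then have "(l1^2 - 1)^2 = 0" by (simp add: power2_eq_square algebra_simps)
    then have "l1^2 = 1" by simp
    moreover have "l1^2 < 1" using assms(7,8) by (simp add: power_less_one_iff)
    ultimately show False by simp
  qed
  have "\<not> (a = l1 \<and> b = l3)"
  proof
    assume "a = l1 \<and> b = l3"
    then have "W = D0" by (simp add: Wd D0_def)
    then show False using UD VW assms(3) by simp
  qed
  then have ab2: "a = l3 \<and> b = l1"
    using aS bS ab ne assms(7,8,9) by auto
  then have VD: "V = transpose P ** diag3 l3 1 l1 ** P" using VW Wd by simp
  define c where "c = (l1+l3)/2"
  define d where "d = (l3-l1)/2"
  define k where "k = sqrt (2::real)"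
  have k0: "k \<noteq> 0" by (simp add: k_def)
  have cd: "c^2 + d^2 = 1" "c^2 + (-d)^2 = 1" using h
    by (simp_all add: c_def d_def power2_eq_square field_simps; linarith)+
  note r1 = rank1[OF h c_def d_def k0]
  note K1 = key[OF oP rot3_rot[OF cd(1)] UD[unfolded D0_def] r1(1)]
  note K2 = key[OF oP rot3_rot[OF cd(2)] VD r1(2)]
  note K3 = key[OF oP rot3_rot[OF cd(2)] UD[unfolded D0_def] r1(3)]
  note K4 = key[OF oP rot3_rot[OF cd(1)] VD r1(4)]
  define mp0 :: "real^3" where "mp0 = vector [1/k,0,1/k]"
  define mm0 :: "real^3" where "mm0 = vector [1/k,0,-1/k]"
  have kk: "k * k = 2" by (simp add: k_def)
  have nm: "norm mp0 = 1" "norm mm0 = 1"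
  proof -
    have "mp0 \<bullet> mp0 = 1" "mm0 \<bullet> mm0 = 1" using kk k0
      by (simp_all add: mp0_def mm0_def inner_vec_def sum_3 field_simps)
    then show "norm mp0 = 1" "norm mm0 = 1" by (simp_all add: norm_eq_sqrt_inner)
  qed
  have TT: "transpose (transpose P) ** transpose P = mat 1" using PP1 by simp
  have nm2: "norm (transpose P *v mp0) = 1" "norm (transpose P *v mm0) = 1"
    using orth_norm[OF TT, of mp0] orth_norm[OF TT, of mm0] nm by (simp_all del: tm)
  have np: "\<not> (\<exists>c. transpose P *v mp0 = c *\<^sub>R (transpose P *v mm0))"
  proof
    assume "\<exists>c. transpose P *v mp0 = c *\<^sub>R (transpose P *v mm0)"
    then obtain c where "transpose P *v mp0 = c *\<^sub>R (transpose P *v mm0)" by blast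
    then have "P *v (transpose P *v mp0) = P *v (c *\<^sub>R (transpose P *v mm0))" by simp
    then have "mp0 = c *\<^sub>R mm0"
      by (simp add: matrix_vector_mul_assoc matrix_vector_mult_scaleR PP1 del: tm)
    then have e1: "mp0$1 = c * mm0$1" and e2: "mp0$3 = c * mm0$3" by simp_all
    have "1/k = c / k" using e1 by (simp add: mp0_def mm0_def)
    moreover have "1/k = - (c / k)" using e2 by (simp add: mp0_def mm0_def)
    ultimately have "1/k = 0" by linarith
    then show False using k0 by simp
  qed
  have d1: "X - Y = outer (x - y) m" if "X - mat 1 = outer x m" "Y - mat 1 = outer y m" for X Y :: "real^3^3" and x y m
  proof -
    have "X - Y = (X - mat 1) - (Y - mat 1)" by simp
    then show ?thesis using that by (simp add: outer_diff)
  qed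
  show ?thesis
    apply (rule exI[of _ "transpose P ** rot3 c d ** P"])
    apply (rule exI[of _ "transpose P ** rot3 c (-d) ** P"])
    apply (rule exI[of _ "transpose P ** rot3 c (-d) ** P"])
    apply (rule exI[of _ "transpose P ** rot3 c d ** P"])
    apply (rule exI[of _ "transpose P *v vector[k*(c*l1-1),0,k*d*l1]"])
    apply (rule exI[of _ "transpose P *v vector[k*(c*l3-1),0,-k*d*l3]"])
    apply (rule exI[of _ "transpose P *v vector[k*(c*l1-1),0,-k*d*l1]"])
    apply (rule exI[of _ "transpose P *v vector[k*(c*l3-1),0,k*d*l3]"])
    apply (rule exI[of _ "transpose P *v mp0"])
    apply (rule exI[of _ "transpose P *v mm0"])
    apply (intro conjI)
    using K1 K2 K3 K4 nm2 np d1[OF K1[THEN conjunct2] K2[THEN conjunct2]]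
      d1[OF K3[THEN conjunct2] K4[THEN conjunct2]]
    unfolding mp0_def mm0_def by blast+
qed

end
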